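(* Let $\Lambda=\mathsf{iA}\oplus\Gamma$ be an iA-logic. Then for every S4K-logic $\Theta$ with $(\mathsf{S4}\otimes\mathsf K)\oplus t(\Gamma)\subseteq\Theta\subseteq(\mathsf{S4}\otimes\mathsf K)\oplus\mathsf{Grz_i}\oplus t(\Gamma)\oplus\mathsf{BHL}$, $\Lambda$ is embedded in $\Theta$ by $t$: for all $\varphi\in\mathcal L_{\multimap}$, $\varphi\in\Lambda$ iff $t(\varphi)\in\Theta$.
   Context: $\mathcal L_{\multimap}$: atoms, $\top,\bot,\wedge,\vee,\to$ and binary $\multimap$. $\mathsf{iA}$: least set containing substitution instances of intuitionistic tautologies and instances of $((\varphi\multimap\psi)\wedge(\varphi\multimap\chi))\to(\varphi\multimap(\psi\wedge\chi))$, $((\varphi\multimap\chi)\wedge(\psi\multimap\chi))\to((\varphi\vee\psi)\multimap\chi)$, $((\varphi\multimap\psi)\wedge(\psi\multimap\chi))\to(\varphi\multimap\chi)$, closed under modus ponens and the rule from $\varphi\to\psi$ infer $\varphi\multimap\psi$; $\mathsf{iA}\oplus\Gamma$ is the least extension containing $\Gamma$ closed under those rules and uniform substitution. S4K-logic: set of formulae of the classical bimodal language $\mathcal L_{i,m}$ ($\Box_i,\Box_m$) containing classical tautologies, $\mathsf K$ for both boxes, $\Box_ip\to p$, $\Box_ip\to\Box_i\Box_ip$, closed under modus ponens, necessitation for both boxes and substitution; $\mathsf{S4}\otimes\mathsf K$ is the least one and $\oplus$ adds axioms. $\mathsf{Grz_i}$: $\Box_i(\Box_i(p\to\Box_ip)\to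 p)\to p$. $\mathsf{BHL}$: $\Box_mp\to\Box_i\Box_mp$. Translation $t$: $t(p)=\Box_ip$, $t(\top)=\top$, $t(\bot)=\bot$, $t(\varphi\star\psi)=\Box_i(t\varphi\star t\psi)$ for $\star\in\{\wedge,\vee,\to\}$, $t(\varphi\multimap\psi)=\Box_i\Box_m(t\varphi\to t\psi)$. *)

theory Defs
  imports Main
begin

datatype ifm =
    Atom nat
  | ITop
  | IBot
  | IAnd ifm ifm
  | IOr ifm ifm
  | IImp ifm ifm
  | Strict ifm ifm

primrec isubst :: "(nat \<Rightarrow> ifm) \<Rightarrow> ifm \<Rightarrow> ifm" where
  "isubst \<sigma> (Atom p) = \<sigma> p"
| "isubst \<sigma> ITop = ITop"
| "isubst \<sigma> IBot = IBot"
| "isubst \<sigma> (IAnd a b) = IAnd (isubst \<sigma> a) (isubst \<sigma> b)"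
| "isubst \<sigma> (IOr a b) = IOr (isubst \<sigma> a) (isubst \<sigma> b)"
| "isubst \<sigma> (IImp a b) = IImp (isubst \<sigma> a) (isubst \<sigma> b)"
| "isubst \<sigma> (Strict a b) = Strict (isubst \<sigma> a) (isubst \<sigma> b)"

text \<open>Substitution instances (in the full language) of intuitionistic propositional
  tautologies: generated by a standard Hilbert calculus for IPC whose axiom schemes
  range over all formulas of the language, closed under modus ponens.\<close>
inductive_set IPC :: "ifm set" where
  ax1: "IImp a (IImp b a) \<in> IPC"
| ax2: "IImp (IImp a (IImp b c)) (IImp (IImp a b) (IImp a c)) \<in> IPC"
| ax3: "IImp (IAnd a b) a \<in> IPC"
| ax4: "IImp (IAnd a b) b \<in> IPC"
| ax5: "IImp a (IImp b (IAnd a b)) \<in> IPC"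
| ax6: "IImp a (IOr a b) \<in> IPC"
| ax7: "IImp b (IOr a b) \<in> IPC"
| ax8: "IImp (IImp a c) (IImp (IImp b c) (IImp (IOr a b) c)) \<in> IPC"
| ax9: "IImp IBot a \<in> IPC"
| ax10: "ITop \<in> IPC"
| mp: "a \<in> IPC \<Longrightarrow> IImp a b \<in> IPC \<Longrightarrow> b \<in> IPC"

inductive_set iA_ext :: "ifm set \<Rightarrow> ifm set" for \<Gamma> :: "ifm set" where
  hyp: "a \<in> \<Gamma> \<Longrightarrow> a \<in> iA_ext \<Gamma>"
| ipc: "a \<in> IPC \<Longrightarrow> a \<in> iA_ext \<Gamma>"
| sAnd: "IImp (IAnd (Strict a b) (Strict a c)) (Strict a (IAnd b c)) \<in> iA_ext \<Gamma>"
| sOr: "IImp (IAnd (Strict a c) (Strict b c)) (Strict (IOr a b) c) \<in> iA_ext \<Gamma>"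
| sTr: "IImp (IAnd (Strict a b) (Strict b c)) (Strict a c) \<in> iA_ext \<Gamma>"
| mp: "a \<in> iA_ext \<Gamma> \<Longrightarrow> IImp a b \<in> iA_ext \<Gamma> \<Longrightarrow> b \<in> iA_ext \<Gamma>"
| strict: "IImp a b \<in> iA_ext \<Gamma> \<Longrightarrow> Strict a b \<in> iA_ext \<Gamma>"
| subst: "a \<in> iA_ext \<Gamma> \<Longrightarrow> isubst \<sigma> a \<in> iA_ext \<Gamma>"

datatype mfm =
    MAtom nat
  | MTop
  | MBot
  | MAnd mfm mfm
  | MOr mfm mfm
  | MImp mfm mfm
  | BoxI mfm
  | BoxM mfm

primrec msubst :: "(nat \<Rightarrow> mfm) \<Rightarrow> mfm \<Rightarrow> mfm" where
  "msubst \<sigma> (MAtom p) = \<sigma> p"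
| "msubst \<sigma> MTop = MTop"
| "msubst \<sigma> MBot = MBot"
| "msubst \<sigma> (MAnd a b) = MAnd (msubst \<sigma> a) (msubst \<sigma> b)"
| "msubst \<sigma> (MOr a b) = MOr (msubst \<sigma> a) (msubst \<sigma> b)"
| "msubst \<sigma> (MImp a b) = MImp (msubst \<sigma> a) (msubst \<sigma> b)"
| "msubst \<sigma> (BoxI a) = BoxI (msubst \<sigma> a)"
| "msubst \<sigma> (BoxM a) = BoxM (msubst \<sigma> a)"

text \<open>Boolean evaluation, treating atoms and boxed formulas as propositional variables.
  A formula is a substitution instance of a classical tautology iff it is true under
  every such valuation.\<close>
primrec meval :: "(mfm \<Rightarrow> bool) \<Rightarrow> mfm \<Rightarrow> bool" where
  "meval v (MAtom p) = v (MAtom p)"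
| "meval v MTop = True"
| "meval v MBot = False"
| "meval v (MAnd a b) = (meval v a \<and> meval v b)"
| "meval v (MOr a b) = (meval v a \<or> meval v b)"
| "meval v (MImp a b) = (meval v a \<longrightarrow> meval v b)"
| "meval v (BoxI a) = v (BoxI a)"
| "meval v (BoxM a) = v (BoxM a)"

definition ctaut :: "mfm \<Rightarrow> bool" where
  "ctaut a \<longleftrightarrow> (\<forall>v. meval v a)"

abbreviation (input) pP :: mfm where "pP \<equiv> MAtom 0"
abbreviation (input) pQ :: mfm where "pQ \<equiv> MAtom 1"

definition axK_i :: mfm where
  "axK_i = MImp (BoxI (MImp pP pQ)) (MImp (BoxI pP) (BoxI pQ))"
definition axK_m :: mfm where
  "axK_m = MImp (BoxM (MImp pP pQ)) (MImp (BoxM pP) (BoxM pQ))"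
definition axT_i :: mfm where
  "axT_i = MImp (BoxI pP) pP"
definition ax4_i :: mfm where
  "ax4_i = MImp (BoxI pP) (BoxI (BoxI pP))"
definition Grz_i :: mfm where
  "Grz_i = MImp (BoxI (MImp (BoxI (MImp pP (BoxI pP))) pP)) pP"
definition BHL :: mfm where
  "BHL = MImp (BoxM pP) (BoxI (BoxM pP))"

definition S4K_logic :: "mfm set \<Rightarrow> bool" where
  "S4K_logic \<Theta> \<longleftrightarrow>
     (\<forall>a. ctaut a \<longrightarrow> a \<in> \<Theta>) \<and>
     axK_i \<in> \<Theta> \<and> axK_m \<in> \<Theta> \<and> axT_i \<in> \<Theta> \<and> ax4_i \<in> \<Theta> \<and>
     (\<forall>a b. a \<in> \<Theta> \<longrightarrow> MImp a b \<in> \<Theta> \<longrightarrow> b \<in> \<Theta>) \<and>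
     (\<forall>a. a \<in> \<Theta> \<longrightarrow> BoxI a \<in> \<Theta>) \<and>
     (\<forall>a. a \<in> \<Theta> \<longrightarrow> BoxM a \<in> \<Theta>) \<and>
     (\<forall>a \<sigma>. a \<in> \<Theta> \<longrightarrow> msubst \<sigma> a \<in> \<Theta>)"

inductive_set S4K_ext :: "mfm set \<Rightarrow> mfm set" for A :: "mfm set" where
  hyp: "a \<in> A \<Longrightarrow> a \<in> S4K_ext A"
| taut: "ctaut a \<Longrightarrow> a \<in> S4K_ext A"
| kI: "axK_i \<in> S4K_ext A"
| kM: "axK_m \<in> S4K_ext A"
| tI: "axT_i \<in> S4K_ext A"
| fourI: "ax4_i \<in> S4K_ext A"
| mp: "a \<in> S4K_ext A \<Longrightarrow> MImp a b \<in> S4K_ext A \<Longrightarrow> b \<in> S4K_ext A"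
| necI: "a \<in> S4K_ext A \<Longrightarrow> BoxI a \<in> S4K_ext A"
| necM: "a \<in> S4K_ext A \<Longrightarrow> BoxM a \<in> S4K_ext A"
| subst: "a \<in> S4K_ext A \<Longrightarrow> msubst \<sigma> a \<in> S4K_ext A"

primrec tr :: "ifm \<Rightarrow> mfm" where
  "tr (Atom p) = BoxI (MAtom p)"
| "tr ITop = MTop"
| "tr IBot = MBot"
| "tr (IAnd a b) = BoxI (MAnd (tr a) (tr b))"
| "tr (IOr a b) = BoxI (MOr (tr a) (tr b))"
| "tr (IImp a b) = BoxI (MImp (tr a) (tr b))"
| "tr (Strict a b) = BoxI (BoxM (MImp (tr a) (tr b)))"

end

theory Submission
  imports Defs
begin


lemma tautI: "ctaut a \<Longrightarrow> a \<in> S4K_ext H" by (rule S4K_ext.taut)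

lemma mp1: "a \<in> S4K_ext H \<Longrightarrow> ctaut (MImp a b) \<Longrightarrow> b \<in> S4K_ext H"
  by (meson S4K_ext.mp S4K_ext.taut)

lemma mp2: "a \<in> S4K_ext H \<Longrightarrow> b \<in> S4K_ext H \<Longrightarrow> ctaut (MImp a (MImp b c)) \<Longrightarrow> c \<in> S4K_ext H"
  by (meson S4K_ext.mp S4K_ext.taut)

lemma mp3: "a \<in> S4K_ext H \<Longrightarrow> b \<in> S4K_ext H \<Longrightarrow> c \<in> S4K_ext H \<Longrightarrow> ctaut (MImp a (MImp b (MImp c d))) \<Longrightarrow> d \<in> S4K_ext H"
  by (meson S4K_ext.mp S4K_ext.taut)

lemma mp4: "a \<in> S4K_ext H \<Longrightarrow> b \<in> S4K_ext H \<Longrightarrow> c \<in> S4K_ext H \<Longrightarrow> e \<in> S4K_ext H \<Longrightarrow> ctaut (MImp a (MImp b (MImp c (MImp e d)))) \<Longrightarrow> d \<in> S4K_ext H"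
  by (meson S4K_ext.mp S4K_ext.taut)

lemma KI: "MImp (BoxI (MImp a b)) (MImp (BoxI a) (BoxI b)) \<in> S4K_ext H"
  using S4K_ext.subst[OF S4K_ext.kI, where \<sigma>="\<lambda>n. if n = 0 then a else b"] by (simp add: axK_i_def)

lemma KM: "MImp (BoxM (MImp a b)) (MImp (BoxM a) (BoxM b)) \<in> S4K_ext H"
  using S4K_ext.subst[OF S4K_ext.kM, where \<sigma>="\<lambda>n. if n = 0 then a else b"] by (simp add: axK_m_def)

lemma TI: "MImp (BoxI a) a \<in> S4K_ext H"
  using S4K_ext.subst[OF S4K_ext.tI, where \<sigma>="\<lambda>n. a"] by (simp add: axT_i_def)

lemma FI: "MImp (BoxI a) (BoxI (BoxI a)) \<in> S4K_ext H"
  using S4K_ext.subst[OF S4K_ext.fourI, where \<sigma>="\<lambda>n. a"] by (simp add: ax4_i_def)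

lemma monoI: "MImp a b \<in> S4K_ext H \<Longrightarrow> MImp (BoxI a) (BoxI b) \<in> S4K_ext H"
  by (meson KI S4K_ext.mp S4K_ext.necI)

lemma monoM: "MImp a b \<in> S4K_ext H \<Longrightarrow> MImp (BoxM a) (BoxM b) \<in> S4K_ext H"
  by (meson KM S4K_ext.mp S4K_ext.necM)

lemma conjBI: "MImp (MAnd (BoxI a) (BoxI b)) (BoxI (MAnd a b)) \<in> S4K_ext H"
proof -
  have "MImp a (MImp b (MAnd a b)) \<in> S4K_ext H" by (rule tautI) (simp add: ctaut_def)
  then have 1: "MImp (BoxI a) (BoxI (MImp b (MAnd a b))) \<in> S4K_ext H" by (rule monoI)
  show ?thesis by (rule mp2[OF 1 KI[of b "MAnd a b"]]) (simp add: ctaut_def)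
qed

lemma conjBM: "MImp (MAnd (BoxM a) (BoxM b)) (BoxM (MAnd a b)) \<in> S4K_ext H"
proof -
  have "MImp a (MImp b (MAnd a b)) \<in> S4K_ext H" by (rule tautI) (simp add: ctaut_def)
  then have 1: "MImp (BoxM a) (BoxM (MImp b (MAnd a b))) \<in> S4K_ext H" by (rule monoM)
  show ?thesis by (rule mp2[OF 1 KM[of b "MAnd a b"]]) (simp add: ctaut_def)
qed

lemma box_intro: "MImp (BoxI a) b \<in> S4K_ext H \<Longrightarrow> MImp (BoxI a) (BoxI b) \<in> S4K_ext H"
  by (rule mp2[OF FI monoI]) (auto simp: ctaut_def)

lemma boxed: "MImp (tr a) (BoxI (tr a)) \<in> S4K_ext H"
proof (cases a)
  case ITop
  have "BoxI MTop \<in> S4K_ext H" by (rule S4K_ext.necI, rule tautI) (simp add: ctaut_def)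
  then show ?thesis using ITop by (auto intro: mp1 simp: ctaut_def)
next
  case IBot then show ?thesis by (auto intro: tautI simp: ctaut_def)
qed (auto intro: FI)

lemma trans_imp: "MImp a b \<in> S4K_ext H \<Longrightarrow> MImp b c \<in> S4K_ext H \<Longrightarrow> MImp a c \<in> S4K_ext H"
  by (erule mp2) (auto simp: ctaut_def)

section \<open>Soundness of the translation\<close>

lemma ipc_tr: "a \<in> IPC \<Longrightarrow> tr a \<in> S4K_ext H"
proof (induction rule: IPC.induct)
  case (ax1 a b)
  have "MImp (tr a) (MImp (tr b) (tr a)) \<in> S4K_ext H" by (rule tautI) (simp add: ctaut_def)
  then have "MImp (BoxI (tr a)) (BoxI (MImp (tr b) (tr a))) \<in> S4K_ext H" by (rule monoI)
  then have "MImp (tr a) (BoxI (MImp (tr b) (tr a))) \<in> S4K_ext H" by (rule trans_imp[OF boxed])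
  then show ?case by (simp add: S4K_ext.necI)
next
  case (ax2 a b c)
  let ?A = "tr a" and ?B = "tr b" and ?C = "tr c"
  have 1: "MImp (MAnd (MImp ?A (BoxI (MImp ?B ?C))) (MImp ?A ?B)) (MImp ?A ?C) \<in> S4K_ext H"
    by (rule mp1[OF TI[of "MImp ?B ?C"]]) (auto simp: ctaut_def)
  have 2: "MImp (BoxI (MAnd (MImp ?A (BoxI (MImp ?B ?C))) (MImp ?A ?B))) (BoxI (MImp ?A ?C)) \<in> S4K_ext H"
    by (rule monoI[OF 1])
  have 3: "MImp (BoxI (MImp ?A (BoxI (MImp ?B ?C)))) (MImp (BoxI (MImp ?A ?B)) (BoxI (MImp ?A ?C))) \<in> S4K_ext H"
    by (rule mp2[OF 2 conjBI[of "MImp ?A (BoxI (MImp ?B ?C))" "MImp ?A ?B"]]) (auto simp: ctaut_def)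
  have 4: "MImp (BoxI (MImp ?A (BoxI (MImp ?B ?C)))) (BoxI (MImp (BoxI (MImp ?A ?B)) (BoxI (MImp ?A ?C)))) \<in> S4K_ext H"
    by (rule box_intro[OF 3])
  show ?case using S4K_ext.necI[OF 4] by simp
next
  case (ax3 a b)
  show ?case by simp (rule S4K_ext.necI, rule mp1[OF TI[of "MAnd (tr a) (tr b)"]]; simp add: ctaut_def)
next
  case (ax4 a b)
  show ?case by simp (rule S4K_ext.necI, rule mp1[OF TI[of "MAnd (tr a) (tr b)"]]; simp add: ctaut_def)
next
  case (ax5 a b)
  let ?A = "tr a" and ?B = "tr b"
  have 1: "MImp (BoxI ?A) (MImp ?B (BoxI (MAnd ?A ?B))) \<in> S4K_ext H"
    by (rule mp2[OF boxed[of b] conjBI[of ?A ?B]]) (auto simp: ctaut_def)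
  have 2: "MImp (BoxI ?A) (BoxI (MImp ?B (BoxI (MAnd ?A ?B)))) \<in> S4K_ext H" by (rule box_intro[OF 1])
  have 3: "MImp ?A (BoxI (MImp ?B (BoxI (MAnd ?A ?B)))) \<in> S4K_ext H" by (rule trans_imp[OF boxed 2])
  show ?case using S4K_ext.necI[OF 3] by simp
next
  case (ax6 a b)
  have "MImp (tr a) (MOr (tr a) (tr b)) \<in> S4K_ext H" by (rule tautI) (simp add: ctaut_def)
  then have "MImp (tr a) (BoxI (MOr (tr a) (tr b))) \<in> S4K_ext H" by (rule trans_imp[OF boxed monoI])
  then show ?case using S4K_ext.necI by simp
next
  case (ax7 b a)
  have "MImp (tr b) (MOr (tr a) (tr b)) \<in> S4K_ext H" by (rule tautI) (simp add: ctaut_def)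
  then have "MImp (tr b) (BoxI (MOr (tr a) (tr b))) \<in> S4K_ext H" by (rule trans_imp[OF boxed monoI])
  then show ?case using S4K_ext.necI by simp
next
  case (ax8 a c b)
  let ?A = "tr a" and ?B = "tr b" and ?C = "tr c"
  have 1: "MImp (MAnd (MImp ?A ?C) (MImp ?B ?C)) (MImp (BoxI (MOr ?A ?B)) ?C) \<in> S4K_ext H"
    by (rule mp1[OF TI[of "MOr ?A ?B"]]) (auto simp: ctaut_def)
  have 2: "MImp (BoxI (MAnd (MImp ?A ?C) (MImp ?B ?C))) (BoxI (MImp (BoxI (MOr ?A ?B)) ?C)) \<in> S4K_ext H"
    by (rule monoI[OF 1])
  have 3: "MImp (BoxI (MImp ?A ?C)) (MImp (BoxI (MImp ?B ?C)) (BoxI (MImp (BoxI (MOr ?A ?B)) ?C))) \<in> S4K_ext H"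
    by (rule mp2[OF 2 conjBI[of "MImp ?A ?C" "MImp ?B ?C"]]) (auto simp: ctaut_def)
  have 4: "MImp (BoxI (MImp ?A ?C)) (BoxI (MImp (BoxI (MImp ?B ?C)) (BoxI (MImp (BoxI (MOr ?A ?B)) ?C)))) \<in> S4K_ext H"
    by (rule box_intro[OF 3])
  show ?case using S4K_ext.necI[OF 4] by simp
next
  case (ax9 a)
  show ?case by simp (rule S4K_ext.necI, rule tautI, simp add: ctaut_def)
next
  case ax10
  show ?case by simp (rule tautI, simp add: ctaut_def)
next
  case (mp a b)
  then show ?case by simp (meson S4K_ext.mp TI)
qed

lemma strict_ax:
  assumes "MImp (MAnd (MImp (tr a) (tr b)) (MImp (tr c) (tr d))) (MImp (tr e) (tr f)) \<in> S4K_ext H"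
  shows "tr (IImp (IAnd (Strict a b) (Strict c d)) (Strict e f)) \<in> S4K_ext H"
proof -
  let ?P = "BoxM (MImp (tr a) (tr b))" and ?Q = "BoxM (MImp (tr c) (tr d))"
  have 1: "MImp (BoxM (MAnd (MImp (tr a) (tr b)) (MImp (tr c) (tr d)))) (BoxM (MImp (tr e) (tr f))) \<in> S4K_ext H"
    by (rule monoM[OF assms])
  have 2: "MImp (BoxI (MAnd (BoxI ?P) (BoxI ?Q))) (BoxM (MImp (tr e) (tr f))) \<in> S4K_ext H"
  proof -
    have h: "MImp (MAnd ?P ?Q) (BoxM (MImp (tr e) (tr f))) \<in> S4K_ext H"
      by (rule mp2[OF 1 conjBM[of "MImp (tr a) (tr b)" "MImp (tr c) (tr d)"]]) (auto simp: ctaut_def)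
    show ?thesis
      by (rule mp4[OF h TI[of "MAnd (BoxI ?P) (BoxI ?Q)"] TI[of ?P] TI[of ?Q]]) (auto simp: ctaut_def)
  qed
  have 3: "MImp (BoxI (MAnd (BoxI ?P) (BoxI ?Q))) (BoxI (BoxM (MImp (tr e) (tr f)))) \<in> S4K_ext H"
    by (rule box_intro[OF 2])
  show ?thesis using S4K_ext.necI[OF 3] by simp
qed

lemma cong2:
  assumes "MImp X X' \<in> S4K_ext H" "MImp X' X \<in> S4K_ext H" "MImp Y Y' \<in> S4K_ext H" "MImp Y' Y \<in> S4K_ext H"
  shows "MImp (MAnd X Y) (MAnd X' Y') \<in> S4K_ext H \<and> MImp (MAnd X' Y') (MAnd X Y) \<in> S4K_ext H \<and>
         MImp (MOr X Y) (MOr X' Y') \<in> S4K_ext H \<and> MImp (MOr X' Y') (MOr X Y) \<in> S4K_ext H \<and>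
         MImp (MImp X Y) (MImp X' Y') \<in> S4K_ext H \<and> MImp (MImp X' Y') (MImp X Y) \<in> S4K_ext H"
  by (intro conjI; rule mp4[OF assms]) (auto simp: ctaut_def)

lemma subst_tr:
  "MImp (msubst (\<lambda>p. tr (\<sigma> p)) (tr a)) (tr (isubst \<sigma> a)) \<in> S4K_ext H \<and>
   MImp (tr (isubst \<sigma> a)) (msubst (\<lambda>p. tr (\<sigma> p)) (tr a)) \<in> S4K_ext H"
proof (induction a)
  case (Atom p)
  then show ?case using TI[of "tr (\<sigma> p)"] boxed[of "\<sigma> p"] by simp
next
  case ITop then show ?case by (auto intro: tautI simp: ctaut_def)
next
  case IBot then show ?case by (auto intro: tautI simp: ctaut_def)
next
  case (IAnd a b)
  then show ?case using cong2[of "msubst (\<lambda>p. tr (\<sigma> p)) (tr a)" "tr (isubst \<sigma> a)" H "msubst (\<lambda>p. tr (\<sigma> p)) (tr b)" "tr (isubst \<sigma> b)"]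
    by (auto intro!: monoI)
next
  case (IOr a b)
  then show ?case using cong2[of "msubst (\<lambda>p. tr (\<sigma> p)) (tr a)" "tr (isubst \<sigma> a)" H "msubst (\<lambda>p. tr (\<sigma> p)) (tr b)" "tr (isubst \<sigma> b)"]
    by (auto intro!: monoI)
next
  case (IImp a b)
  then show ?case using cong2[of "msubst (\<lambda>p. tr (\<sigma> p)) (tr a)" "tr (isubst \<sigma> a)" H "msubst (\<lambda>p. tr (\<sigma> p)) (tr b)" "tr (isubst \<sigma> b)"]
    by (auto intro!: monoI)
next
  case (Strict a b)
  then show ?case using cong2[of "msubst (\<lambda>p. tr (\<sigma> p)) (tr a)" "tr (isubst \<sigma> a)" H "msubst (\<lambda>p. tr (\<sigma> p)) (tr b)" "tr (isubst \<sigma> b)"]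
    by (auto intro!: monoI monoM)
qed

theorem soundness: "a \<in> iA_ext \<Gamma> \<Longrightarrow> tr a \<in> S4K_ext (tr ` \<Gamma>)"
proof (induction rule: iA_ext.induct)
  case (hyp a) then show ?case by (simp add: S4K_ext.hyp)
next
  case (ipc a) then show ?case by (rule ipc_tr)
next
  case (sAnd a b c)
  show ?case
    by (rule strict_ax, simp, rule mp3[OF boxed[of b] boxed[of c] conjBI[of "tr b" "tr c"]]) (auto simp: ctaut_def)
next
  case (sOr a c b)
  show ?case
    by (rule strict_ax, simp, rule mp1[OF TI[of "MOr (tr a) (tr b)"]]) (auto simp: ctaut_def)
next
  case (sTr a b c)
  show ?case
    by (rule strict_ax, rule tautI) (auto simp: ctaut_def)
next
  case (mp a b) then show ?case by simp (meson S4K_ext.mp TI)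
next
  case (strict a b)
  then show ?case by simp (meson S4K_ext.mp TI S4K_ext.necI S4K_ext.necM)
next
  case (subst a \<sigma>)
  then show ?case using subst_tr[of \<sigma> a] S4K_ext.subst[OF subst.IH, of "\<lambda>p. tr (\<sigma> p)"]
    by (meson S4K_ext.mp)
qed



inductive Der :: "ifm set \<Rightarrow> ifm set \<Rightarrow> ifm \<Rightarrow> bool" for G X where
  dhyp: "a \<in> X \<Longrightarrow> Der G X a"
| dax: "a \<in> iA_ext G \<Longrightarrow> Der G X a"
| dmp: "Der G X a \<Longrightarrow> Der G X (IImp a b) \<Longrightarrow> Der G X b"

lemma imp_refl: "IImp a a \<in> IPC"
proof -
  have 1: "IImp (IImp a (IImp (IImp a a) a)) (IImp (IImp a (IImp a a)) (IImp a a)) \<in> IPC" by (rule IPC.ax2)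
  have 2: "IImp a (IImp (IImp a a) a) \<in> IPC" by (rule IPC.ax1)
  have 3: "IImp a (IImp a a) \<in> IPC" by (rule IPC.ax1)
  show ?thesis by (rule IPC.mp[OF 3 IPC.mp[OF 2 1]])
qed

lemma Lipc: "a \<in> IPC \<Longrightarrow> Der G X a" by (rule dax, rule iA_ext.ipc)

lemma deduction: "Der G (insert a X) b \<Longrightarrow> Der G X (IImp a b)"
proof (induction rule: Der.induct)
  case (dhyp b)
  then show ?case
  proof
    assume "b = a" then show ?thesis by (simp add: Lipc imp_refl)
  next
    assume "b \<in> X" then show ?thesis using Der.dmp[OF Der.dhyp Lipc[OF IPC.ax1]] by blast
  qed
next
  case (dax b)
  then show ?case using Der.dmp[OF Der.dax Lipc[OF IPC.ax1]] by blast
next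
  case (dmp b c)
  show ?case by (rule Der.dmp[OF dmp.IH(1) Der.dmp[OF dmp.IH(2) Lipc[OF IPC.ax2]]])
qed

lemma Der_mono: "Der G X a \<Longrightarrow> X \<subseteq> Y \<Longrightarrow> Der G Y a"
proof (induction rule: Der.induct)
  case (dhyp a) then show ?case by (blast intro: Der.dhyp)
next
  case (dax a) then show ?case by (blast intro: Der.dax)
next
  case (dmp a b) then show ?case by (blast intro: Der.dmp)
qed

lemma Der_empty: "Der G {} a \<Longrightarrow> a \<in> iA_ext G"
  by (induction rule: Der.induct) (auto elim: iA_ext.mp)

lemma Der_conjI: "Der G X a \<Longrightarrow> Der G X b \<Longrightarrow> Der G X (IAnd a b)"
  by (rule Der.dmp[OF _ Der.dmp[OF _ Lipc[OF IPC.ax5]]])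

lemma Der_conjE1: "Der G X (IAnd a b) \<Longrightarrow> Der G X a"
  by (rule Der.dmp[OF _ Lipc[OF IPC.ax3]])

lemma Der_conjE2: "Der G X (IAnd a b) \<Longrightarrow> Der G X b"
  by (rule Der.dmp[OF _ Lipc[OF IPC.ax4]])

lemma Der_disjI1: "Der G X a \<Longrightarrow> Der G X (IOr a b)"
  by (rule Der.dmp[OF _ Lipc[OF IPC.ax6]])

lemma Der_disjI2: "Der G X b \<Longrightarrow> Der G X (IOr a b)"
  by (rule Der.dmp[OF _ Lipc[OF IPC.ax7]])

lemma Der_disjE: "Der G X (IOr a b) \<Longrightarrow> Der G X (IImp a c) \<Longrightarrow> Der G X (IImp b c) \<Longrightarrow> Der G X c"
  by (rule Der.dmp[OF _ Der.dmp[OF _ Der.dmp[OF _ Lipc[OF IPC.ax8]]]])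

lemma Lthm: "Der G {a} b \<Longrightarrow> IImp a b \<in> iA_ext G"
proof -
  assume "Der G {a} b"
  then have "Der G {} (IImp a b)" by (rule deduction)
  then show ?thesis by (rule Der_empty)
qed

definition thy :: "ifm set \<Rightarrow> ifm set \<Rightarrow> bool" where
  "thy G u \<longleftrightarrow> iA_ext G \<subseteq> u \<and> (\<forall>a b. a \<in> u \<longrightarrow> IImp a b \<in> u \<longrightarrow> b \<in> u)"

definition Rth :: "ifm set \<Rightarrow> (ifm \<times> ifm) set \<Rightarrow> ifm set \<Rightarrow> bool" where
  "Rth G R u \<longleftrightarrow> thy G u \<and> (\<forall>c d. (c, d) \<in> R \<longrightarrow> c \<in> u \<longrightarrow> d \<in> u)"

definition PT :: "ifm set \<Rightarrow> ifm set \<Rightarrow> bool" where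
  "PT G u \<longleftrightarrow> thy G u \<and> IBot \<notin> u \<and> (\<forall>a b. IOr a b \<in> u \<longrightarrow> a \<in> u \<or> b \<in> u)"

definition Rgood :: "ifm set \<Rightarrow> (ifm \<times> ifm) set \<Rightarrow> bool" where
  "Rgood G R \<longleftrightarrow> (\<forall>c d. IImp c d \<in> iA_ext G \<longrightarrow> (c, d) \<in> R) \<and>
     (\<forall>c d e. (c, d) \<in> R \<longrightarrow> (d, e) \<in> R \<longrightarrow> (c, e) \<in> R) \<and>
     (\<forall>c d e. (c, d) \<in> R \<longrightarrow> (c, e) \<in> R \<longrightarrow> (c, IAnd d e) \<in> R) \<and>
     (\<forall>c d e. (c, e) \<in> R \<longrightarrow> (d, e) \<in> R \<longrightarrow> (IOr c d, e) \<in> R)"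

definition Cn :: "ifm set \<Rightarrow> (ifm \<times> ifm) set \<Rightarrow> ifm set \<Rightarrow> ifm set" where
  "Cn G R X = {d. \<exists>c. Der G X c \<and> (c, d) \<in> R}"

lemma thy_mp: "thy G u \<Longrightarrow> a \<in> u \<Longrightarrow> IImp a b \<in> u \<Longrightarrow> b \<in> u"
  unfolding thy_def by blast

lemma thy_L: "thy G u \<Longrightarrow> a \<in> iA_ext G \<Longrightarrow> a \<in> u"
  unfolding thy_def by blast

lemma thy_Der0: "Der G u a \<Longrightarrow> thy G u \<Longrightarrow> a \<in> u"
proof (induction rule: Der.induct)
  case (dhyp a) then show ?case by simp
next
  case (dax a) then show ?case using thy_L by blast
next
  case (dmp a b) then show ?case using thy_mp by blast
qed

lemma thy_Der: "thy G u \<Longrightarrow> Der G u a \<Longrightarrow> a \<in> u"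
  using thy_Der0 by blast


lemma Cn_sub:
  assumes "Rgood G R" shows "X \<subseteq> Cn G R X"
proof
  fix x assume "x \<in> X"
  moreover have "(x, x) \<in> R" using assms imp_refl[of x] iA_ext.ipc unfolding Rgood_def by blast
  ultimately show "x \<in> Cn G R X" unfolding Cn_def by (auto intro: Der.dhyp)
qed

lemma Cn_Rth:
  assumes g: "Rgood G R" shows "Rth G R (Cn G R X)"
proof -
  have R1: "\<And>c d. IImp c d \<in> iA_ext G \<Longrightarrow> (c, d) \<in> R" using g unfolding Rgood_def by blast
  have R2: "\<And>c d e. (c, d) \<in> R \<Longrightarrow> (d, e) \<in> R \<Longrightarrow> (c, e) \<in> R" using g unfolding Rgood_def by blast
  have R3: "\<And>c d e. (c, d) \<in> R \<Longrightarrow> (c, e) \<in> R \<Longrightarrow> (c, IAnd d e) \<in> R" using g unfolding Rgood_def by blast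
  have L: "iA_ext G \<subseteq> Cn G R X"
  proof
    fix d assume d: "d \<in> iA_ext G"
    have "IImp ITop d \<in> iA_ext G"
      by (rule Der_empty, rule Der.dmp[OF Der.dax[OF d]], rule Lipc, rule IPC.ax1)
    moreover have "Der G X ITop" by (rule Lipc, rule IPC.ax10)
    ultimately show "d \<in> Cn G R X" unfolding Cn_def using R1 by blast
  qed
  have MP: "b \<in> Cn G R X" if a: "a \<in> Cn G R X" and ab: "IImp a b \<in> Cn G R X" for a b
  proof -
    obtain c1 where c1: "Der G X c1" "(c1, a) \<in> R" using a unfolding Cn_def by blast
    obtain c2 where c2: "Der G X c2" "(c2, IImp a b) \<in> R" using ab unfolding Cn_def by blast
    have "(IAnd c1 c2, c1) \<in> R" by (rule R1, rule iA_ext.ipc, rule IPC.ax3)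
    then have 1: "(IAnd c1 c2, a) \<in> R" using c1 R2 by blast
    have "(IAnd c1 c2, c2) \<in> R" by (rule R1, rule iA_ext.ipc, rule IPC.ax4)
    then have 2: "(IAnd c1 c2, IImp a b) \<in> R" using c2 R2 by blast
    have 3: "(IAnd a (IImp a b), b) \<in> R"
      by (rule R1, rule Lthm, rule Der.dmp[OF Der_conjE1 Der_conjE2]; rule Der.dhyp; simp)
    have "(IAnd c1 c2, b) \<in> R" using R2[OF R3[OF 1 2] 3] .
    moreover have "Der G X (IAnd c1 c2)" using c1 c2 by (simp add: Der_conjI)
    ultimately show ?thesis unfolding Cn_def by blast
  qed
  have RC: "e \<in> Cn G R X" if "(d, e) \<in> R" "d \<in> Cn G R X" for d e
    using that R2 unfolding Cn_def by blast
  show ?thesis unfolding Rth_def thy_def using L MP RC by blast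
qed


lemma lindenbaum:
  assumes g: "Rgood G R" and b: "b \<notin> Cn G R S"
  shows "\<exists>u. Rth G R u \<and> PT G u \<and> S \<subseteq> u \<and> b \<notin> u"
proof -
  define T where "T = {u. Rth G R u \<and> S \<subseteq> u \<and> b \<notin> u}"
  have ne: "T \<noteq> {}" using Cn_Rth[OF g] Cn_sub[OF g] b unfolding T_def by blast
  have ch: "\<Union>C \<in> T" if neC: "C \<noteq> {}" and chC: "subset.chain T C" for C
  proof -
    have CT: "C \<subseteq> T" and cmp: "\<And>x y. x \<in> C \<Longrightarrow> y \<in> C \<Longrightarrow> x \<subseteq> y \<or> y \<subseteq> x"
      using chC unfolding subset.chain_def by auto
    obtain u0 where u0: "u0 \<in> C" using neC by blast
    have "iA_ext G \<subseteq> \<Union>C" using u0 CT unfolding T_def Rth_def thy_def by blast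
    moreover have "\<forall>a c. a \<in> \<Union>C \<longrightarrow> IImp a c \<in> \<Union>C \<longrightarrow> c \<in> \<Union>C"
    proof (intro allI impI)
      fix a c assume "a \<in> \<Union>C" "IImp a c \<in> \<Union>C"
      then obtain x y where "x \<in> C" "y \<in> C" "a \<in> x" "IImp a c \<in> y" by blast
      then show "c \<in> \<Union>C" using cmp[of x y] CT unfolding T_def Rth_def thy_def by blast
    qed
    moreover have "\<forall>c d. (c, d) \<in> R \<longrightarrow> c \<in> \<Union>C \<longrightarrow> d \<in> \<Union>C"
      using CT unfolding T_def Rth_def by blast
    moreover have "S \<subseteq> \<Union>C" "b \<notin> \<Union>C" using u0 CT unfolding T_def by blast+
    ultimately have "Rth G R (\<Union>C)" unfolding Rth_def thy_def by blast
    then show ?thesis unfolding T_def using \<open>S \<subseteq> \<Union>C\<close> \<open>b \<notin> \<Union>C\<close> by blast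
  qed
  obtain u where uT: "u \<in> T" and max: "\<And>x. x \<in> T \<Longrightarrow> u \<subseteq> x \<Longrightarrow> x = u"
    using subset_Zorn_nonempty[OF ne ch] by blast
  have Ru: "Rth G R u" and Su: "S \<subseteq> u" and bu: "b \<notin> u" using uT unfolding T_def by auto
  have tu: "thy G u" using Ru unfolding Rth_def by blast
  have R1: "\<And>c d. IImp c d \<in> iA_ext G \<Longrightarrow> (c, d) \<in> R" using g unfolding Rgood_def by blast
  have R4: "\<And>c d e. (c, e) \<in> R \<Longrightarrow> (d, e) \<in> R \<Longrightarrow> (IOr c d, e) \<in> R" using g unfolding Rgood_def by blast
  have bot: "IBot \<notin> u"
  proof
    assume "IBot \<in> u"
    moreover have "IImp IBot b \<in> u" using thy_L[OF tu] iA_ext.ipc IPC.ax9 by blast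
    ultimately show False using thy_mp[OF tu] bu by blast
  qed
  have ext: "\<exists>c. Der G (insert x u) c \<and> (c, b) \<in> R" if "x \<notin> u" for x
  proof (rule ccontr)
    assume "\<not> ?thesis"
    then have "b \<notin> Cn G R (insert x u)" unfolding Cn_def by blast
    moreover have "S \<subseteq> Cn G R (insert x u)" using Cn_sub[OF g, of "insert x u"] Su by blast
    ultimately have "Cn G R (insert x u) \<in> T"
      using Cn_Rth[OF g] unfolding T_def by blast
    moreover have "u \<subseteq> Cn G R (insert x u)" using Cn_sub[OF g, of "insert x u"] by blast
    ultimately have "Cn G R (insert x u) = u" using max by blast
    then show False using Cn_sub[OF g, of "insert x u"] that by blast
  qed
  have prime: "x \<in> u \<or> y \<in> u" if xy: "IOr x y \<in> u" for x y
  proof (rule ccontr)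
    assume "\<not> ?thesis"
    then obtain c1 c2 where c1: "Der G (insert x u) c1" "(c1, b) \<in> R"
      and c2: "Der G (insert y u) c2" "(c2, b) \<in> R" using ext by blast
    have 1: "Der G u (IImp x (IOr c1 c2))" by (rule deduction, rule Der_disjI1, rule c1(1))
    have 2: "Der G u (IImp y (IOr c1 c2))" by (rule deduction, rule Der_disjI2, rule c2(1))
    have "Der G u (IOr c1 c2)" by (rule Der_disjE[OF Der.dhyp[OF xy] 1 2])
    then have "IOr c1 c2 \<in> u" by (rule thy_Der[OF tu])
    moreover have "(IOr c1 c2, b) \<in> R" using R4 c1 c2 by blast
    ultimately show False using Ru bu unfolding Rth_def by blast
  qed
  have "PT G u" unfolding PT_def using tu bot prime by blast
  then show ?thesis using Ru Su bu by blast
qed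



definition W :: "ifm set \<Rightarrow> ifm set set" where "W G = {w. PT G w}"
definition br :: "ifm set \<Rightarrow> ifm \<Rightarrow> ifm set set" where "br G a = {w \<in> W G. a \<in> w}"
definition Rm :: "ifm set \<Rightarrow> ifm set \<Rightarrow> bool" where
  "Rm w u \<longleftrightarrow> (\<forall>c d. Strict c d \<in> w \<longrightarrow> c \<in> u \<longrightarrow> d \<in> u)"
definition bI :: "ifm set \<Rightarrow> ifm set set \<Rightarrow> ifm set set" where
  "bI G X = {w \<in> W G. \<forall>u \<in> W G. w \<subseteq> u \<longrightarrow> u \<in> X}"
definition bM :: "ifm set \<Rightarrow> ifm set set \<Rightarrow> ifm set set" where
  "bM G X = {w \<in> W G. \<forall>u \<in> W G. Rm w u \<longrightarrow> u \<in> X}"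

definition Rp :: "ifm set \<Rightarrow> (ifm \<times> ifm) set" where "Rp G = {(c, d). IImp c d \<in> iA_ext G}"
definition Rw :: "ifm set \<Rightarrow> (ifm \<times> ifm) set" where "Rw w = {(c, d). Strict c d \<in> w}"

lemma PT_thy: "PT G w \<Longrightarrow> thy G w" by (simp add: PT_def)

lemma L_mp: "a \<in> iA_ext G \<Longrightarrow> IImp a b \<in> iA_ext G \<Longrightarrow> b \<in> iA_ext G" by (rule iA_ext.mp)

lemma Rgood_Rp: "Rgood G (Rp G)"
  unfolding Rgood_def Rp_def
proof (intro conjI allI impI; simp)
  fix c d e assume "IImp c d \<in> iA_ext G" "IImp d e \<in> iA_ext G"
  then show "IImp c e \<in> iA_ext G"
    by (intro Lthm) (rule Der.dmp[OF Der.dmp[OF Der.dhyp Der.dax] Der.dax]; simp)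
next
  fix c d e assume "IImp c d \<in> iA_ext G" "IImp c e \<in> iA_ext G"
  then show "IImp c (IAnd d e) \<in> iA_ext G"
    by (intro Lthm Der_conjI) (rule Der.dmp[OF Der.dhyp Der.dax]; simp)+
next
  fix c d e assume a: "IImp c e \<in> iA_ext G" "IImp d e \<in> iA_ext G"
  have "IImp (IImp c e) (IImp (IImp d e) (IImp (IOr c d) e)) \<in> iA_ext G" by (rule iA_ext.ipc, rule IPC.ax8)
  then show "IImp (IOr c d) e \<in> iA_ext G" using a by (meson L_mp)
qed

lemma PT_Der: "PT G w \<Longrightarrow> Der G w a \<Longrightarrow> a \<in> w"
  using thy_Der PT_thy by blast

lemma PT_L: "PT G w \<Longrightarrow> a \<in> iA_ext G \<Longrightarrow> a \<in> w"
  using thy_L PT_thy by blast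

lemma PT_mp: "PT G w \<Longrightarrow> a \<in> w \<Longrightarrow> IImp a b \<in> w \<Longrightarrow> b \<in> w"
  using thy_mp PT_thy by blast

lemma PT_conj: "PT G w \<Longrightarrow> IAnd a b \<in> w \<longleftrightarrow> a \<in> w \<and> b \<in> w"
proof
  assume "PT G w" "IAnd a b \<in> w"
  then show "a \<in> w \<and> b \<in> w" using PT_Der Der_conjE1[OF Der.dhyp] Der_conjE2[OF Der.dhyp] by blast
next
  assume "PT G w" "a \<in> w \<and> b \<in> w"
  then show "IAnd a b \<in> w" using PT_Der[OF _ Der_conjI[OF Der.dhyp Der.dhyp]] by blast
qed

lemma PT_disj: "PT G w \<Longrightarrow> IOr a b \<in> w \<longleftrightarrow> a \<in> w \<or> b \<in> w"
proof
  assume "PT G w" "IOr a b \<in> w"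
  then show "a \<in> w \<or> b \<in> w" unfolding PT_def by blast
next
  assume "PT G w" "a \<in> w \<or> b \<in> w"
  then show "IOr a b \<in> w" using PT_Der[OF _ Der_disjI1[OF Der.dhyp]] PT_Der[OF _ Der_disjI2[OF Der.dhyp]] by blast
qed

lemma PT_top: "PT G w \<Longrightarrow> ITop \<in> w"
  using PT_L iA_ext.ipc IPC.ax10 by blast

lemma PT_bot: "PT G w \<Longrightarrow> IBot \<notin> w"
  by (simp add: PT_def)

lemma Rgood_Rw: assumes w: "PT G w" shows "Rgood G (Rw w)"
  unfolding Rgood_def Rw_def
proof (intro conjI allI impI; simp)
  fix c d assume "IImp c d \<in> iA_ext G"
  then show "Strict c d \<in> w" using PT_L[OF w] iA_ext.strict by blast
next
  fix c d e assume "Strict c d \<in> w" "Strict d e \<in> w"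
  then have "IAnd (Strict c d) (Strict d e) \<in> w" using PT_conj[OF w] by blast
  then show "Strict c e \<in> w" using PT_mp[OF w] PT_L[OF w iA_ext.sTr] by blast
next
  fix c d e assume "Strict c d \<in> w" "Strict c e \<in> w"
  then have "IAnd (Strict c d) (Strict c e) \<in> w" using PT_conj[OF w] by blast
  then show "Strict c (IAnd d e) \<in> w" using PT_mp[OF w] PT_L[OF w iA_ext.sAnd] by blast
next
  fix c d e assume "Strict c e \<in> w" "Strict d e \<in> w"
  then have "IAnd (Strict c e) (Strict d e) \<in> w" using PT_conj[OF w] by blast
  then show "Strict (IOr c d) e \<in> w" using PT_mp[OF w] PT_L[OF w iA_ext.sOr] by blast
qed

lemma imp_mem:
  assumes w: "PT G w"
  shows "IImp a b \<in> w \<longleftrightarrow> (\<forall>u \<in> W G. w \<subseteq> u \<longrightarrow> a \<in> u \<longrightarrow> b \<in> u)"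
proof
  assume "IImp a b \<in> w" then show "\<forall>u \<in> W G. w \<subseteq> u \<longrightarrow> a \<in> u \<longrightarrow> b \<in> u"
    unfolding W_def using PT_mp by blast
next
  assume all: "\<forall>u \<in> W G. w \<subseteq> u \<longrightarrow> a \<in> u \<longrightarrow> b \<in> u"
  show "IImp a b \<in> w"
  proof (rule ccontr)
    assume nab: "IImp a b \<notin> w"
    have "b \<notin> Cn G (Rp G) (insert a w)"
    proof
      assume "b \<in> Cn G (Rp G) (insert a w)"
      then obtain c where c: "Der G (insert a w) c" "IImp c b \<in> iA_ext G" unfolding Cn_def Rp_def by blast
      then have "Der G (insert a w) b" using Der.dmp[OF c(1) Der.dax[OF c(2)]] by blast
      then have "Der G w (IImp a b)" by (rule deduction)
      then show False using PT_Der[OF w] nab by blast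
    qed
    then obtain u where "PT G u" "insert a w \<subseteq> u" "b \<notin> u" using lindenbaum[OF Rgood_Rp] by blast
    then show False using all unfolding W_def by blast
  qed
qed

lemma strict_mem:
  assumes w: "PT G w"
  shows "Strict a b \<in> w \<longleftrightarrow> (\<forall>u \<in> W G. Rm w u \<longrightarrow> a \<in> u \<longrightarrow> b \<in> u)"
proof
  assume "Strict a b \<in> w" then show "\<forall>u \<in> W G. Rm w u \<longrightarrow> a \<in> u \<longrightarrow> b \<in> u"
    unfolding Rm_def by blast
next
  assume all: "\<forall>u \<in> W G. Rm w u \<longrightarrow> a \<in> u \<longrightarrow> b \<in> u"
  show "Strict a b \<in> w"
  proof (rule ccontr)
    assume nab: "Strict a b \<notin> w"
    have "b \<notin> Cn G (Rw w) {a}"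
    proof
      assume "b \<in> Cn G (Rw w) {a}"
      then obtain c where c: "Der G {a} c" "Strict c b \<in> w" unfolding Cn_def Rw_def by blast
      have "Strict a c \<in> w" using PT_L[OF w iA_ext.strict[OF Lthm[OF c(1)]]] .
      then have "(a, b) \<in> Rw w" using c(2) Rgood_Rw[OF w] unfolding Rgood_def Rw_def by blast
      then show False using nab unfolding Rw_def by blast
    qed
    then obtain u where u: "Rth G (Rw w) u" "PT G u" "{a} \<subseteq> u" "b \<notin> u"
      using lindenbaum[OF Rgood_Rw[OF w]] by blast
    have "Rm w u" using u(1) unfolding Rth_def Rm_def Rw_def by blast
    then show False using all u unfolding W_def by blast
  qed
qed



definition cls :: "ifm set \<Rightarrow> (ifm \<times> ifm) list \<Rightarrow> ifm set set" where
  "cls G cl = {w \<in> W G. \<forall>(a, b) \<in> set cl. a \<in> w \<longrightarrow> b \<in> w}"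

definition Adm :: "ifm set \<Rightarrow> ifm set set \<Rightarrow> bool" where
  "Adm G X \<longleftrightarrow> (\<exists>cl. X = cls G cl)"

fun bc :: "ifm list \<Rightarrow> ifm" where
  "bc [] = ITop"
| "bc (x # xs) = IAnd x (bc xs)"

lemma bc_mem: "PT G w \<Longrightarrow> bc xs \<in> w \<longleftrightarrow> (\<forall>x \<in> set xs. x \<in> w)"
  by (induction xs) (auto simp: PT_conj PT_top)

lemma W_PT: "w \<in> W G \<longleftrightarrow> PT G w" by (simp add: W_def)

lemma cls_sub: "cls G cl \<subseteq> W G" by (auto simp: cls_def)

lemma Adm_sub: "Adm G X \<Longrightarrow> X \<subseteq> W G" using cls_sub by (auto simp: Adm_def)

lemma br_cls: "br G f = cls G [(ITop, f)]"
  by (auto simp: br_def cls_def W_PT PT_top)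

lemma Adm_br: "Adm G (br G f)" using br_cls by (auto simp: Adm_def)

lemma bI_cls: "bI G (cls G cl) = br G (bc (map (\<lambda>(a, b). IImp a b) cl))"
proof -
  have "w \<in> bI G (cls G cl) \<longleftrightarrow> w \<in> br G (bc (map (\<lambda>(a, b). IImp a b) cl))" for w
  proof (cases "w \<in> W G")
    case True
    then have pw: "PT G w" by (simp add: W_PT)
    have "w \<in> bI G (cls G cl) \<longleftrightarrow> (\<forall>(a, b) \<in> set cl. \<forall>u \<in> W G. w \<subseteq> u \<longrightarrow> a \<in> u \<longrightarrow> b \<in> u)"
      using True by (auto simp: bI_def cls_def)
    also have "\<dots> \<longleftrightarrow> (\<forall>(a, b) \<in> set cl. IImp a b \<in> w)" using imp_mem[OF pw] by auto
    also have "\<dots> \<longleftrightarrow> w \<in> br G (bc (map (\<lambda>(a, b). IImp a b) cl))"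
      using True bc_mem[OF pw] by (auto simp: br_def)
    finally show ?thesis .
  qed (auto simp: bI_def br_def)
  then show ?thesis by blast
qed

lemma bM_cls: "bM G (cls G cl) = br G (bc (map (\<lambda>(a, b). Strict a b) cl))"
proof -
  have "w \<in> bM G (cls G cl) \<longleftrightarrow> w \<in> br G (bc (map (\<lambda>(a, b). Strict a b) cl))" for w
  proof (cases "w \<in> W G")
    case True
    then have pw: "PT G w" by (simp add: W_PT)
    have "w \<in> bM G (cls G cl) \<longleftrightarrow> (\<forall>(a, b) \<in> set cl. \<forall>u \<in> W G. Rm w u \<longrightarrow> a \<in> u \<longrightarrow> b \<in> u)"
      using True by (auto simp: bM_def cls_def)
    also have "\<dots> \<longleftrightarrow> (\<forall>(a, b) \<in> set cl. Strict a b \<in> w)" using strict_mem[OF pw] by auto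
    also have "\<dots> \<longleftrightarrow> w \<in> br G (bc (map (\<lambda>(a, b). Strict a b) cl))"
      using True bc_mem[OF pw] by (auto simp: br_def)
    finally show ?thesis .
  qed (auto simp: bM_def br_def)
  then show ?thesis by blast
qed

lemma Adm_bI: "Adm G X \<Longrightarrow> \<exists>f. bI G X = br G f"
  using bI_cls by (auto simp: Adm_def)

lemma Adm_bI': "Adm G X \<Longrightarrow> Adm G (bI G X)"
  using Adm_bI Adm_br by metis

lemma Adm_bM': "Adm G X \<Longrightarrow> Adm G (bM G X)"
  using bM_cls Adm_br by (metis Adm_def)

lemma Adm_Int: "Adm G X \<Longrightarrow> Adm G Y \<Longrightarrow> Adm G (X \<inter> Y)"
  unfolding Adm_def
proof (elim exE)
  fix xs ys assume "X = cls G xs" "Y = cls G ys"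
  then have "X \<inter> Y = cls G (xs @ ys)" by (auto simp: cls_def)
  then show "\<exists>cl. X \<inter> Y = cls G cl" by blast
qed

lemma Adm_W: "Adm G (W G)"
  unfolding Adm_def by (rule exI[of _ "[]"]) (auto simp: cls_def)

lemma Adm_empty: "Adm G {}"
  unfolding Adm_def by (rule exI[of _ "[(ITop, IBot)]"]) (auto simp: cls_def W_PT PT_top PT_bot)

lemma Adm_Un: "Adm G X \<Longrightarrow> Adm G Y \<Longrightarrow> Adm G (X \<union> Y)"
  unfolding Adm_def
proof (elim exE)
  fix xs ys assume X: "X = cls G xs" and Y: "Y = cls G ys"
  define zs where "zs = concat (map (\<lambda>x. map (\<lambda>y. (IAnd (fst x) (fst y), IOr (snd x) (snd y))) ys) xs)"
  have zs1: "(IAnd (fst x) (fst y), IOr (snd x) (snd y)) \<in> set zs" if "x \<in> set xs" "y \<in> set ys" for x y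
    using that unfolding zs_def by auto
  have zs2: "\<exists>x \<in> set xs. \<exists>y \<in> set ys. z = (IAnd (fst x) (fst y), IOr (snd x) (snd y))" if "z \<in> set zs" for z
    using that unfolding zs_def by auto
  have "X \<union> Y = cls G zs"
  proof
    show "X \<union> Y \<subseteq> cls G zs"
    proof
      fix w assume w: "w \<in> X \<union> Y"
      then have pw: "PT G w" using X Y unfolding cls_def by (auto simp: W_PT)
      show "w \<in> cls G zs" unfolding cls_def
      proof (intro CollectI conjI ballI)
        show "w \<in> W G" using pw by (simp add: W_PT)
        fix z assume "z \<in> set zs"
        then obtain x y where xy: "x \<in> set xs" "y \<in> set ys" "z = (IAnd (fst x) (fst y), IOr (snd x) (snd y))"
          using zs2 by blast
        show "case z of (a, b) \<Rightarrow> a \<in> w \<longrightarrow> b \<in> w"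
          using w xy unfolding X Y cls_def by (auto simp: PT_conj[OF pw] PT_disj[OF pw] split: prod.splits)
      qed
    qed
  next
    show "cls G zs \<subseteq> X \<union> Y"
    proof
      fix w assume w: "w \<in> cls G zs"
      then have pw: "PT G w" by (simp add: cls_def W_PT)
      have all: "fst x \<in> w \<longrightarrow> fst y \<in> w \<longrightarrow> snd x \<in> w \<or> snd y \<in> w" if "x \<in> set xs" "y \<in> set ys" for x y
        using w zs1[OF that] unfolding cls_def by (auto simp: PT_conj[OF pw] PT_disj[OF pw])
      show "w \<in> X \<union> Y"
      proof (rule ccontr)
        assume "w \<notin> X \<union> Y"
        moreover have "w \<in> W G" using w by (simp add: cls_def)
        ultimately have nx: "\<not> (\<forall>x \<in> set xs. fst x \<in> w \<longrightarrow> snd x \<in> w)"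
          and ny: "\<not> (\<forall>y \<in> set ys. fst y \<in> w \<longrightarrow> snd y \<in> w)"
          unfolding X Y cls_def by (auto simp: split_def)
        obtain x where "x \<in> set xs" "fst x \<in> w" "snd x \<notin> w" using nx by blast
        moreover obtain y where "y \<in> set ys" "fst y \<in> w" "snd y \<notin> w" using ny by blast
        ultimately show False using all by blast
      qed
    qed
  qed
  then show "\<exists>cl. X \<union> Y = cls G cl" by blast
qed

lemma Adm_compl: "Adm G X \<Longrightarrow> Adm G (W G - X)"
proof -
  have "Adm G (W G - cls G xs)" for xs
  proof (induction xs)
    case Nil
    have "W G - cls G [] = {}" by (auto simp: cls_def)
    then show ?case using Adm_empty[of G] by metis
  next
    case (Cons x xs)
    obtain a b where x: "x = (a, b)" by fastforce
    have "W G - cls G (x # xs) = cls G [(ITop, a), (b, IBot)] \<union> (W G - cls G xs)"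
      by (auto simp: cls_def x W_PT PT_top PT_bot)
    then show ?case using Adm_Un[OF _ Cons.IH] by (auto simp: Adm_def)
  qed
  then show "Adm G X \<Longrightarrow> Adm G (W G - X)" by (auto simp: Adm_def)
qed

primrec sem :: "ifm set \<Rightarrow> (nat \<Rightarrow> ifm set set) \<Rightarrow> mfm \<Rightarrow> ifm set set" where
  "sem G V (MAtom p) = V p"
| "sem G V MTop = W G"
| "sem G V MBot = {}"
| "sem G V (MAnd a b) = sem G V a \<inter> sem G V b"
| "sem G V (MOr a b) = sem G V a \<union> sem G V b"
| "sem G V (MImp a b) = (W G - sem G V a) \<union> sem G V b"
| "sem G V (BoxI a) = bI G (sem G V a)"
| "sem G V (BoxM a) = bM G (sem G V a)"

lemma Adm_sem: "(\<And>p. Adm G (V p)) \<Longrightarrow> Adm G (sem G V a)"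
  by (induction a) (auto intro: Adm_W Adm_empty Adm_Int Adm_Un Adm_compl Adm_bI' Adm_bM')

lemma sem_subst: "sem G V (msubst \<sigma> a) = sem G (\<lambda>p. sem G V (\<sigma> p)) a"
  by (induction a) auto

lemma meval_sem: "w \<in> W G \<Longrightarrow> meval (\<lambda>x. w \<in> sem G V x) a \<longleftrightarrow> w \<in> sem G V a"
  by (induction a) auto

definition valid :: "ifm set \<Rightarrow> mfm \<Rightarrow> bool" where
  "valid G a \<longleftrightarrow> (\<forall>V. (\<forall>p. Adm G (V p)) \<longrightarrow> W G \<subseteq> sem G V a)"

lemma grz_point:
  assumes X: "Adm G X" and w: "w \<in> W G" "w \<notin> X"
  shows "\<exists>u \<in> W G. w \<subseteq> u \<and> u \<notin> X \<and> (\<forall>v \<in> W G. u \<subseteq> v \<longrightarrow> v \<in> X \<longrightarrow> (\<forall>z \<in> W G. v \<subseteq> z \<longrightarrow> z \<in> X))"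
proof -
  obtain cl where cl: "X = cls G cl" using X by (auto simp: Adm_def)
  define F where "F = set (map fst cl) \<union> set (map snd cl)"
  have fF: "finite F" by (simp add: F_def)
  have dep: "v \<in> X \<longleftrightarrow> v' \<in> X" if "v \<in> W G" "v' \<in> W G" "F \<inter> v = F \<inter> v'" for v v'
  proof -
    have "\<forall>(a, b) \<in> set cl. (a \<in> v \<longleftrightarrow> a \<in> v') \<and> (b \<in> v \<longleftrightarrow> b \<in> v')"
      using that(3) unfolding F_def by (force)
    then show ?thesis using that unfolding cl cls_def by auto
  qed
  define M where "M = {card (F \<inter> u) | u. u \<in> W G \<and> w \<subseteq> u \<and> u \<notin> X}"
  have fM: "finite M"
  proof (rule finite_subset[of _ "{..card F}"])
    show "M \<subseteq> {..card F}" unfolding M_def using fF by (auto intro: card_mono)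
  qed simp
  have neM: "M \<noteq> {}" using w unfolding M_def by blast
  have "\<exists>u. u \<in> W G \<and> w \<subseteq> u \<and> u \<notin> X \<and> card (F \<inter> u) = Max M"
    using Max_in[OF fM neM] unfolding M_def by force
  then obtain u where u: "u \<in> W G" "w \<subseteq> u" "u \<notin> X" "card (F \<inter> u) = Max M"
    by blast
  have "\<forall>v \<in> W G. u \<subseteq> v \<longrightarrow> v \<in> X \<longrightarrow> (\<forall>z \<in> W G. v \<subseteq> z \<longrightarrow> z \<in> X)"
  proof (intro ballI impI; rule ccontr)
    fix v z assume v: "v \<in> W G" "u \<subseteq> v" "v \<in> X" and z: "z \<in> W G" "v \<subseteq> z" "z \<notin> X"
    have "card (F \<inter> z) \<in> M" unfolding M_def using z v u by blast
    then have le: "card (F \<inter> z) \<le> card (F \<inter> u)" using u(4) Max_ge[OF fM] by simp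
    have sub: "F \<inter> u \<subseteq> F \<inter> z" using v z by blast
    have "F \<inter> u = F \<inter> z" using card_subset_eq[OF _ sub] le card_mono[OF _ sub] fF by (simp add: antisym)
    then have "F \<inter> v = F \<inter> u" using v z by blast
    then show False using dep[OF v(1) u(1)] v u by blast
  qed
  then show ?thesis using u by blast
qed

lemma valid_Grz: "valid G Grz_i"
  unfolding valid_def
proof (intro allI impI subsetI)
  fix V :: "nat \<Rightarrow> ifm set set" and w assume V: "\<forall>p. Adm G (V p)" and w: "w \<in> W G"
  let ?X = "V 0"
  show "w \<in> sem G V Grz_i"
  proof (cases "w \<in> ?X")
    case True then show ?thesis by (simp add: Grz_i_def)
  next
    case False
    obtain u where u: "u \<in> W G" "w \<subseteq> u" "u \<notin> ?X"
      and P: "\<forall>v \<in> W G. u \<subseteq> v \<longrightarrow> v \<in> ?X \<longrightarrow> (\<forall>z \<in> W G. v \<subseteq> z \<longrightarrow> z \<in> ?X)"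
      using grz_point[OF _ w False] V by blast
    have "v \<in> (W G - ?X) \<union> bI G ?X" if "v \<in> W G" "u \<subseteq> v" for v
    proof (cases "v \<in> ?X")
      case True
      then have "\<forall>z \<in> W G. v \<subseteq> z \<longrightarrow> z \<in> ?X" using P that by blast
      then show ?thesis using that(1) unfolding bI_def by blast
    qed (use that in blast)
    then have "u \<in> bI G ((W G - ?X) \<union> bI G ?X)" using u(1) unfolding bI_def by blast
    then have "u \<notin> (W G - bI G ((W G - ?X) \<union> bI G ?X)) \<union> ?X" using u(3) by blast
    then have "w \<notin> bI G ((W G - bI G ((W G - ?X) \<union> bI G ?X)) \<union> ?X)"
      using u(1,2) unfolding bI_def by blast
    then show ?thesis using w by (simp add: Grz_i_def)
  qed
qed

lemma valid_BHL: "valid G BHL"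
  unfolding valid_def
proof (intro allI impI subsetI)
  fix V :: "nat \<Rightarrow> ifm set set" and w assume w: "w \<in> W G"
  have "w \<in> bI G (bM G (V 0))" if "w \<in> bM G (V 0)"
  proof -
    have "u \<in> bM G (V 0)" if "u \<in> W G" "w \<subseteq> u" for u
    proof -
      have "Rm w v" if "Rm u v" for v using that \<open>w \<subseteq> u\<close> unfolding Rm_def by blast
      then show ?thesis using \<open>w \<in> bM G (V 0)\<close> \<open>u \<in> W G\<close> unfolding bM_def by blast
    qed
    then show ?thesis using w unfolding bI_def by blast
  qed
  then show "w \<in> sem G V BHL" using w by (auto simp: BHL_def)
qed

lemma bI_br: "bI G (br G f) = br G f"
  by (auto simp: bI_def br_def)

lemma truth:
  assumes s: "\<And>p. br G (\<sigma> p) = bI G (V p)"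
  shows "sem G V (tr \<phi>) = br G (isubst \<sigma> \<phi>)"
proof (induction \<phi>)
  case (Atom p) then show ?case using s by simp
next
  case ITop then show ?case by (auto simp: br_def W_PT PT_top)
next
  case IBot then show ?case by (auto simp: br_def W_PT PT_bot)
next
  case (IAnd a b)
  have "br G (isubst \<sigma> a) \<inter> br G (isubst \<sigma> b) = br G (IAnd (isubst \<sigma> a) (isubst \<sigma> b))"
    by (auto simp: br_def W_PT PT_conj)
  then show ?case using IAnd by (simp add: bI_br)
next
  case (IOr a b)
  have "br G (isubst \<sigma> a) \<union> br G (isubst \<sigma> b) = br G (IOr (isubst \<sigma> a) (isubst \<sigma> b))"
    by (auto simp: br_def W_PT PT_disj)
  then show ?case using IOr by (simp add: bI_br)
next
  case (IImp a b)
  have "bI G ((W G - br G (isubst \<sigma> a)) \<union> br G (isubst \<sigma> b)) = br G (IImp (isubst \<sigma> a) (isubst \<sigma> b))"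
    using imp_mem by (auto simp: bI_def br_def W_PT)
  then show ?case using IImp by simp
next
  case (Strict a b)
  have "bM G ((W G - br G (isubst \<sigma> a)) \<union> br G (isubst \<sigma> b)) = br G (Strict (isubst \<sigma> a) (isubst \<sigma> b))"
    using strict_mem by (auto simp: bM_def br_def W_PT)
  then show ?case using Strict by (simp add: bI_br)
qed

lemma valid_tr: assumes "\<gamma> \<in> G" shows "valid G (tr \<gamma>)"
  unfolding valid_def
proof (intro allI impI)
  fix V :: "nat \<Rightarrow> ifm set set" assume V: "\<forall>p. Adm G (V p)"
  have "\<forall>p. \<exists>f. br G f = bI G (V p)" using Adm_bI V by metis
  then obtain \<sigma> :: "nat \<Rightarrow> ifm" where s: "\<And>p. br G (\<sigma> p) = bI G (V p)" by metis
  have "isubst \<sigma> \<gamma> \<in> iA_ext G" using assms by (intro iA_ext.subst iA_ext.hyp)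
  then show "W G \<subseteq> sem G V (tr \<gamma>)" unfolding truth[OF s] by (auto simp: br_def W_PT PT_L)
qed

lemma completeness_model:
  "a \<in> S4K_ext ({Grz_i, BHL} \<union> tr ` G) \<Longrightarrow> valid G a"
proof (induction rule: S4K_ext.induct)
  case (hyp a) then show ?case using valid_Grz valid_BHL valid_tr by blast
next
  case (taut a)
  then show ?case unfolding valid_def ctaut_def using meval_sem by blast
next
  case kI then show ?case by (simp add: valid_def axK_i_def) (unfold bI_def, blast)
next
  case kM then show ?case by (simp add: valid_def axK_m_def) (unfold bM_def, blast)
next
  case tI then show ?case by (simp add: valid_def axT_i_def) (unfold bI_def, blast)
next
  case fourI then show ?case by (simp add: valid_def ax4_i_def) (unfold bI_def, blast)
next
  case (mp a b) then show ?case unfolding valid_def by (simp, blast)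
next
  case (necI a) then show ?case unfolding valid_def by (simp, unfold bI_def, blast)
next
  case (necM a) then show ?case unfolding valid_def by (simp, unfold bM_def, blast)
next
  case (subst a \<sigma>)
  show ?case unfolding valid_def
  proof (intro allI impI)
    fix V :: "nat \<Rightarrow> ifm set set" assume "\<forall>p. Adm G (V p)"
    then have "\<forall>p. Adm G (sem G V (\<sigma> p))" using Adm_sem by blast
    then have A: "\<And>p. Adm G (sem G V (\<sigma> p))" by blast
    show "W G \<subseteq> sem G V (msubst \<sigma> a)"
      unfolding sem_subst by (rule subst.IH[unfolded valid_def, rule_format, OF A])
  qed
qed

lemma isubst_id: "isubst Atom a = a" by (induction a) auto

lemma faithful:
  assumes "tr \<phi> \<in> S4K_ext ({Grz_i, BHL} \<union> tr ` G)" shows "\<phi> \<in> iA_ext G"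
proof (rule ccontr)
  assume n: "\<phi> \<notin> iA_ext G"
  have "\<phi> \<notin> Cn G (Rp G) {}"
  proof
    assume "\<phi> \<in> Cn G (Rp G) {}"
    then obtain c where c: "Der G {} c" "IImp c \<phi> \<in> iA_ext G" unfolding Cn_def Rp_def by blast
    have "\<phi> \<in> iA_ext G" by (rule iA_ext.mp[OF Der_empty[OF c(1)] c(2)])
    then show False using n by blast
  qed
  then obtain w where w: "PT G w" "\<phi> \<notin> w" using lindenbaum[OF Rgood_Rp] by blast
  define V where "V = (\<lambda>p. br G (Atom p))"
  have V: "\<forall>p. Adm G (V p)" unfolding V_def using Adm_br by blast
  have s: "\<And>p. br G (Atom p) = bI G (V p)" unfolding V_def by (simp add: bI_br)
  have V': "\<And>p. Adm G (V p)" using V by blast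
  have e1: "W G \<subseteq> sem G V (tr \<phi>)" by (rule completeness_model[OF assms, unfolded valid_def, rule_format, OF V'])
  have "sem G V (tr \<phi>) = br G (isubst Atom \<phi>)" by (rule truth[OF s])
  then have e2: "sem G V (tr \<phi>) = br G \<phi>" by (simp only: isubst_id)
  have "w \<in> W G" using w(1) by (simp add: W_PT)
  then have "w \<in> br G \<phi>" using e1 e2 by blast
  then show False using w by (simp add: br_def)
qed


theorem theorem4p14:
  fixes \<Gamma> :: "ifm set" and \<Theta> :: "mfm set"
  assumes "S4K_logic \<Theta>"
    and "S4K_ext (tr ` \<Gamma>) \<subseteq> \<Theta>"
    and "\<Theta> \<subseteq> S4K_ext ({Grz_i, BHL} \<union> tr ` \<Gamma>)"
  shows "\<forall>\<phi>. \<phi> \<in> iA_ext \<Gamma> \<longleftrightarrow> tr \<phi> \<in> \<Theta>"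
proof (intro allI iffI)
  fix \<phi> assume "\<phi> \<in> iA_ext \<Gamma>"
  then show "tr \<phi> \<in> \<Theta>" using soundness assms(2) by blast
next
  fix \<phi> assume "tr \<phi> \<in> \<Theta>"
  then show "\<phi> \<in> iA_ext \<Gamma>" using faithful assms(3) by blast
qed

end
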